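(* Let $(X,E,\ell)$ be a uniformly connected and fully deterministic edge-labelled directed graph with label alphabet $\Sigma$. Then for all $x,y\in X$ the language $L_{x,y}$ is growth sensitive.
   Context: $\Sigma$ is a finite alphabet, $\Sigma^*$ the set of finite words (including the empty word $\epsilon$), $\Sigma^+=\Sigma^*\setminus\{\epsilon\}$. A factor of $a_1\cdots a_n$ is a word $a_i\cdots a_j$, $1\le i\le j\le n$. For $L\subset\Sigma^*$, $\mathsf h(L)=\limsup_{n\to\infty}\frac1n\log|\{w\in L:|w|=n\}|$ and, for finite $F\subset\Sigma^+$, $L^F=\{w\in L:\text{no }v\in F\text{ is a factor of }w\}$. $L$ is growth sensitive if $\mathsf h(L^F)<\mathsf h(L)$ for every finite non-empty set $F\subset\Sigma^+$ consisting of factors of elements of $L$. $(X,E,\ell)$ is a directed graph whose edges $(x,a,y)$ carry labels $a\in\Sigma$ (two edges with the same endpoints have distinct labels); $L_{x,y}$ is the set of labels (concatenated edge labels) of all paths from $x$ to $y$, including $\epsilon$ for the empty path when $x=y$. The graph is fully deterministic if for every vertex $x$ and every $a\in\Sigma$ there is exactly one edge with initial vertex $x$ and label $a$. It is uniformly connected if there is a path between any ordered pair of vertices and there is $K$ such that for every edge from $x$ to $y$ there is a path from $y$ to $x$ of length at most $K$. *)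

theory Defs
  imports Complex_Main "HOL-Library.Extended_Real" "HOL-Library.Liminf_Limsup"
begin

definition factor :: "'a list \<Rightarrow> 'a list \<Rightarrow> bool" where
  "factor v w \<longleftrightarrow> v \<noteq> [] \<and> (\<exists>u z. w = u @ v @ z)"

definition nwords :: "'a list set \<Rightarrow> nat \<Rightarrow> nat" where
  "nwords L n = card {w \<in> L. length w = n}"

definition growth :: "'a list set \<Rightarrow> ereal" where
  "growth L = limsup (\<lambda>n. if nwords L n = 0 then (-\<infinity>)
                            else ereal (ln (real (nwords L n)) / real n))"

definition avoiding :: "'a list set \<Rightarrow> 'a list set \<Rightarrow> 'a list set" where
  "avoiding L F = {w \<in> L. \<forall>v\<in>F. \<not> factor v w}"

definition growth_sensitive :: "'a list set \<Rightarrow> bool" where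
  "growth_sensitive L \<longleftrightarrow>
     (\<forall>F. finite F \<and> F \<noteq> {} \<and> (\<forall>v\<in>F. \<exists>w\<in>L. factor v w)
          \<longrightarrow> growth (avoiding L F) < growth L)"

inductive path :: "'v set \<Rightarrow> ('v \<times> 'a \<times> 'v) set \<Rightarrow> 'v \<Rightarrow> 'a list \<Rightarrow> 'v \<Rightarrow> bool"
  for X E where
  path_nil: "x \<in> X \<Longrightarrow> path X E x [] x"
| path_cons: "(x, a, z) \<in> E \<Longrightarrow> path X E z w y \<Longrightarrow> path X E x (a # w) y"

definition lang :: "'v set \<Rightarrow> ('v \<times> 'a \<times> 'v) set \<Rightarrow> 'v \<Rightarrow> 'v \<Rightarrow> 'a list set" where
  "lang X E x y = {w. path X E x w y}"

definition labelled_graph :: "'v set \<Rightarrow> ('v \<times> 'a \<times> 'v) set \<Rightarrow> 'a set \<Rightarrow> bool" where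
  "labelled_graph X E \<Sigma> \<longleftrightarrow> finite \<Sigma> \<and> E \<subseteq> X \<times> \<Sigma> \<times> X"

definition fully_deterministic :: "'v set \<Rightarrow> ('v \<times> 'a \<times> 'v) set \<Rightarrow> 'a set \<Rightarrow> bool" where
  "fully_deterministic X E \<Sigma> \<longleftrightarrow> (\<forall>x\<in>X. \<forall>a\<in>\<Sigma>. \<exists>!y. (x, a, y) \<in> E)"

definition uniformly_connected :: "'v set \<Rightarrow> ('v \<times> 'a \<times> 'v) set \<Rightarrow> bool" where
  "uniformly_connected X E \<longleftrightarrow>
     (\<forall>x\<in>X. \<forall>y\<in>X. \<exists>w. path X E x w y) \<and>
     (\<exists>K::nat. \<forall>x a y. (x, a, y) \<in> E \<longrightarrow> (\<exists>w. path X E y w x \<and> length w \<le> K))"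

end

theory Submission
  imports Defs
begin


lemma path_props:
  assumes "path X E x w y" "E \<subseteq> X \<times> S \<times> X"
  shows "set w \<subseteq> S \<and> x \<in> X \<and> y \<in> X"
  using assms by (induction rule: path.induct) auto

lemma path_append:
  "path X E x u z \<Longrightarrow> path X E z w y \<Longrightarrow> path X E x (u @ w) y"
  by (induction rule: path.induct) (auto intro: path.intros)

lemma path_appendD:
  assumes "path X E x (u @ w) y" "E \<subseteq> X \<times> S \<times> X"
  shows "\<exists>z. path X E x u z \<and> path X E z w y"
  using assms(1)
proof (induction u arbitrary: x)
  case Nil
  then have "x \<in> X" using path_props[OF _ assms(2)] by blast
  then show ?case using Nil by (auto intro: path.intros)
next
  case (Cons a u)
  from Cons.prems obtain z where "(x, a, z) \<in> E" "path X E z (u @ w) y"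
    by (cases rule: path.cases) auto
  with Cons.IH obtain z' where "path X E z u z'" "path X E z' w y" by blast
  then show ?case using \<open>(x, a, z) \<in> E\<close> by (blast intro: path.intros)
qed

lemma path_det:
  assumes "path X E x w y" "path X E x w y'" "E \<subseteq> X \<times> S \<times> X"
    "fully_deterministic X E S"
  shows "y = y'"
  using assms(1,2)
proof (induction arbitrary: y' rule: path.induct)
  case (path_nil x)
  then show ?case by (auto elim: path.cases)
next
  case (path_cons x a z w y)
  from path_cons.prems obtain z' where z': "(x, a, z') \<in> E" "path X E z' w y'"
    by (cases rule: path.cases) auto
  have "x \<in> X" "a \<in> S" using path_cons.hyps(1) assms(3) by auto
  then have "z = z'" using assms(4) z'(1) path_cons.hyps(1)
    unfolding fully_deterministic_def by blast
  then show ?case using path_cons.IH z'(2) by blast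
qed

lemma path_exists:
  assumes "x \<in> X" "set w \<subseteq> S" "E \<subseteq> X \<times> S \<times> X" "fully_deterministic X E S"
  shows "\<exists>y. path X E x w y"
  using assms(1,2)
proof (induction w arbitrary: x)
  case Nil
  then show ?case by (auto intro: path.intros)
next
  case (Cons a w)
  have "x \<in> X" "a \<in> S" using Cons.prems by auto
  then have "\<exists>!z. (x, a, z) \<in> E" using assms(4) unfolding fully_deterministic_def by auto
  then obtain z where "(x, a, z) \<in> E" by auto
  then have "z \<in> X" using assms(3) by auto
  then obtain y where "path X E z w y" using Cons by auto
  then show ?case using \<open>(x, a, z) \<in> E\<close> by (auto intro: path.intros)
qed

lemma path_reverse:
  assumes "path X E x w y"
    "\<forall>x a y. (x, a, y) \<in> E \<longrightarrow> (\<exists>w. path X E y w x \<and> length w \<le> K)"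
  shows "\<exists>r. path X E y r x \<and> length r \<le> K * length w"
  using assms(1)
proof (induction rule: path.induct)
  case (path_nil x)
  then show ?case by (auto intro: path.intros)
next
  case (path_cons x a z w y)
  then obtain r1 where r1: "path X E y r1 z" "length r1 \<le> K * length w" by auto
  obtain r0 where r0: "path X E z r0 x" "length r0 \<le> K" using assms(2) path_cons.hyps(1) by blast
  show ?case using path_append[OF r1(1) r0(1)] r1(2) r0(2) by (intro exI[of _ "r1 @ r0"]) auto
qed

lemma overlap:
  assumes "s @ v @ t = s' @ v @ t'" "v \<noteq> []"
    "\<not> factor v s" "\<not> factor v s'" "length s mod length v = length s' mod length v"
  shows "s = s'"
proof -
  have key: "length a \<ge> length b \<Longrightarrow> a = b" if eq: "b @ v @ c = a @ v @ d" and
    "\<not> factor v a" "length b mod length v = length a mod length v" for a b c d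
  proof -
    assume le: "length a \<ge> length b"
    show "a = b"
    proof (rule ccontr)
      assume "a \<noteq> b"
      then have "length a \<noteq> length b"
        using eq by (metis append_eq_append_conv)
      then have lt: "length b < length a" using le by simp
      have "length b + length v \<le> length a"
      proof (rule ccontr)
        assume "\<not> ?thesis"
        then have "length a - length b < length v" using lt by simp
        moreover have "(length a - length b) mod length v = 0"
          using that(3) lt by (metis mod_eq_dvd_iff_nat less_imp_le_nat dvd_imp_mod_0)
        ultimately show False using lt
          by (metis zero_less_diff mod_less not_gr0)
      qed
      then have t1: "take (length b + length v) (a @ v @ d) = take (length b + length v) a" by simp
      have t2: "take (length b + length v) (b @ v @ c) = b @ v" by simp
      have "take (length b + length v) a = b @ v" using eq t1 t2 by metis
      then have "a = b @ v @ drop (length b + length v) a"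
        by (metis append_assoc append_take_drop_id)
      then show False using that(2) assms(2) unfolding factor_def by blast
    qed
  qed
  show ?thesis
  proof (cases "length s \<le> length s'")
    case True
    then show ?thesis using key[OF assms(1) assms(4)] assms(5) by simp
  next
    case False
    then show ?thesis using key[OF assms(1)[symmetric] assms(3)] assms(5) by simp
  qed
qed




lemma factor_append_l: "factor v a \<Longrightarrow> factor v (a @ b)"
  unfolding factor_def by (metis append_assoc)
lemma factor_append_r: "factor v b \<Longrightarrow> factor v (a @ b)"
  unfolding factor_def by (metis append_assoc)
lemma factor_take: "factor v (take n u) \<Longrightarrow> factor v u"
  by (metis append_take_drop_id factor_append_l)
lemma factor_drop: "factor v (drop n u) \<Longrightarrow> factor v u"
  by (metis append_take_drop_id factor_append_r)

locale GG =
  fixes X :: "'v set" and E :: "('v \<times> 'a \<times> 'v) set" and S :: "'a set" and K :: nat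
    and v :: "'a list"
  assumes sub: "E \<subseteq> X \<times> S \<times> X"
    and fd: "fully_deterministic X E S"
    and rv: "\<forall>x a y. (x, a, y) \<in> E \<longrightarrow> (\<exists>w. path X E y w x \<and> length w \<le> K)"
    and vne: "v \<noteq> []" and vS: "set v \<subseteq> S"
begin

definition dl :: "'v \<Rightarrow> 'a list \<Rightarrow> 'v" where
  "dl z w = (SOME y. path X E z w y)"

lemma dl_eq: "path X E z w y \<Longrightarrow> dl z w = y"
  unfolding dl_def by (metis (mono_tags, lifting) someI_ex path_det sub fd)

lemma dl_path: "z \<in> X \<Longrightarrow> set w \<subseteq> S \<Longrightarrow> path X E z w (dl z w)"
  unfolding dl_def using path_exists[OF _ _ sub fd] by (metis someI_ex)

definition D :: "'v \<Rightarrow> 'a list" where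
  "D z = v @ (SOME r. path X E (dl z v) r z \<and> length r \<le> K * length v)"

lemma D_props:
  assumes "z \<in> X"
  shows "path X E z (D z) z" "length v \<le> length (D z)"
    "length (D z) \<le> length v + K * length v"
proof -
  have p: "path X E z v (dl z v)" using dl_path[OF assms vS] .
  then have "\<exists>r. path X E (dl z v) r z \<and> length r \<le> K * length v"
    using path_reverse[OF p rv] by blast
  then have r: "path X E (dl z v) (SOME r. path X E (dl z v) r z \<and> length r \<le> K * length v) z
     \<and> length (SOME r. path X E (dl z v) r z \<and> length r \<le> K * length v) \<le> K * length v"
    by (rule someI_ex)
  show "path X E z (D z) z" unfolding D_def using path_append[OF p] r by blast
  show "length v \<le> length (D z)" unfolding D_def by simp
  show "length (D z) \<le> length v + K * length v" unfolding D_def using r by simp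
qed

fun ins :: "nat \<Rightarrow> 'v \<Rightarrow> 'a list \<Rightarrow> nat list \<Rightarrow> 'a list" where
  "ins g z u [] = u"
| "ins g z u (t # ts) = take (t * length v) u @ D (dl z (take (t * length v) u))
     @ drop (t * length v) (take (g * length v) u)
     @ ins g (dl z (take (g * length v) u)) (drop (g * length v) u) ts"

lemma split3:
  assumes "t \<le> g"
  shows "take (t * m) u @ drop (t * m) (take (g * m) u) @ drop (g * m) u = u"
proof -
  have "t * m \<le> g * m" using assms by simp
  then have "take (t * m) u = take (t * m) (take (g * m) u)" by (simp add: min_def)
  then show ?thesis by (metis append_assoc append_take_drop_id)
qed

lemma ins_path:
  assumes "path X E z u y" "\<forall>t\<in>set ts. t \<le> g"
  shows "path X E z (ins g z u ts) y \<and> length u + length ts * length v \<le> length (ins g z u ts)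
     \<and> length (ins g z u ts) \<le> length u + length ts * (length v + K * length v)"
  using assms
proof (induction ts arbitrary: z u)
  case Nil
  then show ?case by simp
next
  case (Cons t ts)
  define m where "m = length v"
  define s1 where "s1 = take (t * m) u"
  define s2 where "s2 = drop (t * m) (take (g * m) u)"
  define r where "r = drop (g * m) u"
  have u: "u = s1 @ s2 @ r" unfolding s1_def s2_def r_def using split3[of t g m u] Cons.prems(2) by simp
  obtain z1 where z1: "path X E z s1 z1" "path X E z1 (s2 @ r) y"
    using path_appendD[OF _ sub] Cons.prems(1) u by metis
  obtain z2 where z2: "path X E z1 s2 z2" "path X E z2 r y"
    using path_appendD[OF _ sub] z1(2) by metis
  have e1: "dl z s1 = z1" using dl_eq z1(1) .
  have "take (g * m) u = s1 @ s2" unfolding s1_def s2_def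
    using split3[of t g m "take (g * m) u"] Cons.prems(2) by simp
  then have e2: "dl z (take (g * m) u) = z2" using dl_eq path_append[OF z1(1) z2(1)] by simp
  have z1X: "z1 \<in> X" using path_props[OF z1(1) sub] by blast
  have IH: "path X E z2 (ins g z2 r ts) y \<and> length r + length ts * m \<le> length (ins g z2 r ts)
     \<and> length (ins g z2 r ts) \<le> length r + length ts * (m + K * m)"
    using Cons.IH[OF z2(2)] Cons.prems(2) unfolding m_def by simp
  have eq: "ins g z u (t # ts) = s1 @ D z1 @ s2 @ ins g z2 r ts"
    using e1 e2 unfolding s1_def s2_def r_def m_def by simp
  have p: "path X E z (s1 @ D z1 @ s2 @ ins g z2 r ts) y"
    using path_append[OF z1(1) path_append[OF D_props(1)[OF z1X] path_append[OF z2(1)]]] IH by blast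
  have "length u = length s1 + length s2 + length r" using u by simp
  then show ?case using eq p IH D_props(2,3)[OF z1X] unfolding m_def by (simp add: algebra_simps)
qed

end



context GG begin

lemma ins_inj:
  assumes "path X E z u y" "path X E z u' y'" "length u = length u'"
    "\<not> factor v u" "\<not> factor v u'" "length ts = length ts'"
    "\<forall>t\<in>set ts. t \<le> g" "\<forall>t\<in>set ts'. t \<le> g" "length ts * (g * length v) \<le> length u"
    "ins g z u ts = ins g z u' ts'"
  shows "u = u' \<and> ts = ts'"
  using assms
proof (induction ts arbitrary: ts' z u u' y y')
  case Nil
  then show ?case by simp
next
  case (Cons t ts)
  obtain t' ts'' where ts': "ts' = t' # ts''" using Cons.prems(6) by (cases ts') auto
  define m where "m = length v"
  have mpos: "m > 0" using vne unfolding m_def by simp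
  define s1 where "s1 = take (t * m) u"
  define s2 where "s2 = drop (t * m) (take (g * m) u)"
  define r where "r = drop (g * m) u"
  define s1' where "s1' = take (t' * m) u'"
  define s2' where "s2' = drop (t' * m) (take (g * m) u')"
  define r' where "r' = drop (g * m) u'"
  have tg: "t \<le> g" "t' \<le> g" using Cons.prems(7,8) ts' by auto
  have gm: "g * m \<le> length u" "g * m \<le> length u'" using Cons.prems(9,3) unfolding m_def by auto
  have tm: "t * m \<le> g * m" "t' * m \<le> g * m" using tg by auto
  have tu: "t * m \<le> length u" "t' * m \<le> length u'" using gm tm by linarith+
  have ls1: "length s1 = t * m" "length s1' = t' * m" unfolding s1_def s1'_def
    using tu by auto
  have ls2: "length s2 = g * m - t * m" "length s2' = g * m - t' * m" unfolding s2_def s2'_def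
    using gm by auto
  have u: "u = s1 @ s2 @ r" unfolding s1_def s2_def r_def using split3[of t g m u] tg by simp
  have u': "u' = s1' @ s2' @ r'" unfolding s1'_def s2'_def r'_def using split3[of t' g m u'] tg by simp
  have tk: "take (g * m) u = s1 @ s2" "take (g * m) u' = s1' @ s2'" unfolding s1_def s2_def s1'_def s2'_def
    using split3[of t g m "take (g * m) u"] split3[of t' g m "take (g * m) u'"] tg by simp_all
  define z1 where "z1 = dl z s1"
  define z1' where "z1' = dl z s1'"
  define z2 where "z2 = dl z (take (g * m) u)"
  define z2' where "z2' = dl z (take (g * m) u')"
  have W: "s1 @ D z1 @ s2 @ ins g z2 r ts = s1' @ D z1' @ s2' @ ins g z2' r' ts''"
    using Cons.prems(10) ts' unfolding s1_def s2_def r_def s1'_def s2'_def r'_def z1_def z2_def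
      z1'_def z2'_def m_def by simp
  have nf1: "\<not> factor v s1" using Cons.prems(4) u factor_append_l by metis
  have nf1': "\<not> factor v s1'" using Cons.prems(5) u' factor_append_l by metis
  have "s1 @ v @ (drop m (D z1) @ s2 @ ins g z2 r ts) = s1' @ v @ (drop m (D z1') @ s2' @ ins g z2' r' ts'')"
    using W unfolding D_def m_def by simp
  then have s1eq: "s1 = s1'" using overlap[OF _ vne nf1 nf1'] ls1 unfolding m_def by simp
  then have teq: "t = t'" using ls1 mpos by simp
  have "s2 @ ins g z2 r ts = s2' @ ins g z2' r' ts''" using W s1eq unfolding z1_def z1'_def by simp
  then have s2eq: "s2 = s2'" and restq: "ins g z2 r ts = ins g z2' r' ts''"
    using ls2 teq by (simp_all add: append_eq_append_conv)
  have tkeq: "take (g * m) u = take (g * m) u'" using tk s1eq s2eq by simp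
  have z22: "z2 = z2'" unfolding z2_def z2'_def using tkeq by simp
  obtain w1 where w1: "path X E z (take (g*m) u) w1" "path X E w1 r y"
    using path_appendD[OF _ sub, of z "take (g*m) u" r y] Cons.prems(1) unfolding r_def by auto
  obtain w2 where w2: "path X E z (take (g*m) u') w2" "path X E w2 r' y'"
    using path_appendD[OF _ sub, of z "take (g*m) u'" r' y'] Cons.prems(2) unfolding r'_def by auto
  have "z2 = w1" unfolding z2_def using dl_eq w1(1) .
  have "z2' = w2" unfolding z2'_def using dl_eq w2(1) .
  have IH: "r = r' \<and> ts = ts''"
  proof (rule Cons.IH)
    show "path X E z2 r y" using w1 \<open>z2 = w1\<close> by simp
    show "path X E z2 r' y'" using w2 \<open>z2' = w2\<close> z22 by simp
    show "length r = length r'" unfolding r_def r'_def using Cons.prems(3) by simp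
    show "\<not> factor v r" unfolding r_def using Cons.prems(4) factor_drop by metis
    show "\<not> factor v r'" unfolding r'_def using Cons.prems(5) factor_drop by metis
    show "length ts = length ts''" using Cons.prems(6) ts' by simp
    show "\<forall>t\<in>set ts. t \<le> g" using Cons.prems(7) by simp
    show "\<forall>t\<in>set ts''. t \<le> g" using Cons.prems(8) ts' by simp
    show "length ts * (g * length v) \<le> length r" unfolding r_def using Cons.prems(9) m_def by simp
    show "ins g z2 r ts = ins g z2 r' ts''" using restq z22 by simp
  qed
  show ?case using IH u u' s1eq s2eq teq ts' by simp
qed

end



lemma finite_level:
  assumes "finite S" "\<forall>w\<in>L. set w \<subseteq> S"
  shows "finite {w \<in> L. length w = n}"
  by (rule finite_subset[OF _ finite_lists_length_eq[OF assms(1), of n]]) (use assms(2) in auto)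

lemma nwords_le:
  assumes "finite S" "\<forall>w\<in>L. set w \<subseteq> S"
  shows "nwords L n \<le> card S ^ n"
  unfolding nwords_def
  by (rule order.trans[OF card_mono[OF finite_lists_length_eq[OF assms(1), of n]]])
     (use assms(2) card_lists_length_eq[OF assms(1)] in auto)

context GG begin

lemma lang_sub: "w \<in> lang X E x y \<Longrightarrow> set w \<subseteq> S"
  unfolding lang_def using path_props[OF _ sub] by blast

lemma counting:
  fixes g n :: nat
  assumes "finite S" "v \<in> F" "x \<in> X"
  defines "Q \<equiv> n div (g * length v)"
  shows "nwords (avoiding (lang X E x y) F) n * g ^ Q
     \<le> (\<Sum>l\<in>{n + Q * length v .. n + Q * (length v + K * length v)}. nwords (lang X E x y) l)"
proof -
  define L where "L = lang X E x y"
  define A where "A = {u \<in> avoiding L F. length u = n}"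
  define B where "B = {ts. set ts \<subseteq> {..<g} \<and> length ts = Q}"
  define I where "I = {n + Q * length v .. n + Q * (length v + K * length v)}"
  define T where "T = (\<Union>l\<in>I. {w \<in> L. length w = l})"
  have LS: "\<forall>w\<in>L. set w \<subseteq> S" unfolding L_def using lang_sub by blast
  have finA: "finite A" unfolding A_def avoiding_def
    by (rule finite_subset[OF _ finite_level[OF assms(1) LS, of n]]) auto
  have cardA: "card A = nwords (avoiding L F) n" unfolding A_def nwords_def by simp
  have cardB: "card B = g ^ Q" unfolding B_def using card_lists_length_eq[of "{..<g}" Q] by simp
  have finT: "finite T" unfolding T_def I_def using finite_level[OF assms(1) LS] by auto
  have inj: "inj_on (\<lambda>(u, ts). ins g x u ts) (A \<times> B)"
  proof (rule inj_onI)
    fix p1 p2 assume h0: "p1 \<in> A \<times> B" "p2 \<in> A \<times> B"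
      "(\<lambda>(u, ts). ins g x u ts) p1 = (\<lambda>(u, ts). ins g x u ts) p2"
    obtain u ts u' ts' where pp: "p1 = (u, ts)" "p2 = (u', ts')" by (cases p1, cases p2) auto
    have h: "(u, ts) \<in> A \<times> B" "(u', ts') \<in> A \<times> B" "ins g x u ts = ins g x u' ts'"
      using h0 pp by auto
    have Qle: "Q * (g * length v) \<le> n" unfolding Q_def by (metis div_times_less_eq_dividend mult.commute)
    have p: "path X E x u y" "path X E x u' y"
      using h unfolding A_def avoiding_def L_def lang_def by auto
    have l: "length u = length u'" "length ts = length ts'" using h unfolding A_def B_def by auto
    have nf: "\<not> factor v u" "\<not> factor v u'" using h assms(2) unfolding A_def avoiding_def by auto
    have tg: "\<forall>t\<in>set ts. t \<le> g" "\<forall>t\<in>set ts'. t \<le> g" using h unfolding B_def by auto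
    have ql: "length ts * (g * length v) \<le> length u" using h Qle unfolding A_def B_def by auto
    have "u = u' \<and> ts = ts'" by (rule ins_inj[OF p l(1) nf l(2) tg ql h(3)])
    then show "p1 = p2" using pp by simp
  qed
  have img: "(\<lambda>(u, ts). ins g x u ts) ` (A \<times> B) \<subseteq> T"
  proof clarify
    fix u ts assume h: "u \<in> A" "ts \<in> B"
    have p: "path X E x u y" using h unfolding A_def avoiding_def L_def lang_def by auto
    have "\<forall>t\<in>set ts. t \<le> g" using h unfolding B_def by auto
    from ins_path[OF p this] h
    show "ins g x u ts \<in> T" unfolding T_def I_def L_def lang_def A_def B_def by auto
  qed
  have "card (A \<times> B) \<le> card T" by (rule card_inj_on_le[OF inj img finT])
  also have "\<dots> \<le> (\<Sum>l\<in>I. card {w \<in> L. length w = l})" unfolding T_def by (rule card_UN_le) (simp add: I_def)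
  finally show ?thesis using cardA cardB unfolding card_cartesian_product I_def nwords_def L_def
    by (simp add: L_def)
qed

end



definition gr :: "(nat \<Rightarrow> nat) \<Rightarrow> ereal" where
  "gr f = limsup (\<lambda>n. if f n = 0 then (-\<infinity>) else ereal (ln (real (f n)) / real n))"

lemma growth_gr: "growth L = gr (nwords L)"
  unfolding growth_def gr_def by simp

lemma exp_eventually:
  fixes c C :: real
  assumes "c > 0" "C \<ge> 0"
  shows "eventually (\<lambda>n. real n * C + 1 < exp (real n / c - 2)) sequentially"
proof -
  define N :: nat where "N = nat \<lceil>4 * c^2 * (C + 1)\<rceil> + 1"
  have "real n * C + 1 < exp (real n / c - 2)" if "n \<ge> N" for n
  proof -
    have n1: "real n \<ge> 1" using that unfolding N_def by simp
    have nb: "real n > 4 * c^2 * (C + 1)" using that unfolding N_def by linarith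
    have "exp (real n / c - 2) = exp ((real n / c - 2) / 2) ^ 2"
      by (simp add: exp_double[symmetric] power2_eq_square exp_add[symmetric])
    also have "exp ((real n / c - 2) / 2) \<ge> real n / (2 * c)"
      using exp_ge_add_one_self[of "(real n / c - 2) / 2"] assms(1) by (simp add: field_simps)
    then have "exp ((real n / c - 2) / 2) ^ 2 \<ge> (real n / (2 * c)) ^ 2"
      using assms(1) n1 by (intro power_mono) auto
    finally have e: "exp (real n / c - 2) \<ge> (real n)^2 / (4 * c^2)"
      by (simp add: power_divide power_mult_distrib)
    have "real n * C + 1 \<le> real n * (C + 1)" using n1 by (simp add: algebra_simps)
    also have "\<dots> < real n * (real n / (4 * c^2))"
    proof -
      have "C + 1 < real n / (4 * c^2)" using nb assms(1) by (simp add: field_simps)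
      then have "real n * (C + 1) < real n * (real n / (4 * c^2))"
        using n1 by (intro mult_strict_left_mono) auto
      then show ?thesis by simp
    qed
    also have "\<dots> = (real n)^2 / (4 * c^2)" by (simp add: power2_eq_square)
    finally show ?thesis using e by simp
  qed
  then show ?thesis unfolding eventually_sequentially by blast
qed




lemma gr_le:
  assumes "\<forall>n. a n \<le> d ^ n" "d \<ge> 1"
  shows "gr a \<le> ereal (ln (real d))"
  unfolding gr_def
proof (rule Limsup_bounded, rule always_eventually, intro allI)
  fix n
  show "(if a n = 0 then - \<infinity> else ereal (ln (real (a n)) / real n)) \<le> ereal (ln (real d))"
  proof (cases "a n = 0")
    case False
    have ld: "ln (real d) \<ge> 0" using assms(2) by simp
    show ?thesis
    proof (cases "n = 0")
      case True then show ?thesis using False ld by simp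
    next
      case n: False
      have "ln (real (a n)) \<le> ln (real (d ^ n))"
        using False assms(1,2) by (subst ln_le_cancel_iff) (auto simp del: of_nat_power)
      also have "\<dots> = real n * ln (real d)" using assms(2) by (simp add: ln_realpow)
      finally show ?thesis using False n assms(2) by (simp add: field_simps)
    qed
  qed simp
qed

lemma gr_ge0:
  assumes "\<forall>N. \<exists>n\<ge>N. a n > 0"
  shows "gr a \<ge> 0"
proof (rule ccontr)
  assume "\<not> gr a \<ge> 0"
  then have "gr a < 0" by simp
  then have "eventually (\<lambda>n. (if a n = 0 then - \<infinity> else ereal (ln (real (a n)) / real n)) < 0) sequentially"
    unfolding gr_def by (rule Limsup_lessD)
  then obtain N where N: "\<forall>n\<ge>N. (if a n = 0 then - \<infinity> else ereal (ln (real (a n)) / real n)) < 0"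
    unfolding eventually_sequentially by blast
  obtain n where "n \<ge> N" "a n > 0" using assms by blast
  then have "ln (real (a n)) / real n < 0" using N by fastforce
  moreover have "ln (real (a n)) \<ge> 0" using \<open>a n > 0\<close> by simp
  ultimately show False by (metis divide_nonneg_nonneg of_nat_0_le_iff not_le)
qed

lemma gr_upper:
  assumes "gr a < ereal r" "r \<ge> 0"
  shows "\<exists>N. \<forall>n\<ge>N. real (a n) \<le> exp (r * real n)"
proof -
  have "eventually (\<lambda>n. (if a n = 0 then - \<infinity> else ereal (ln (real (a n)) / real n)) < ereal r) sequentially"
    using assms(1) unfolding gr_def by (rule Limsup_lessD)
  then obtain N where N: "\<forall>n\<ge>N. (if a n = 0 then - \<infinity> else ereal (ln (real (a n)) / real n)) < ereal r"
    unfolding eventually_sequentially by blast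
  have "real (a n) \<le> exp (r * real n)" if "n \<ge> N + 1" for n
  proof (cases "a n = 0")
    case True then show ?thesis by simp
  next
    case False
    have n: "real n > 0" using that by simp
    have "(if a n = 0 then - \<infinity> else ereal (ln (real (a n)) / real n)) < ereal r"
      using N that by simp
    then have "ln (real (a n)) / real n < r" using False by simp
    then have "ln (real (a n)) < r * real n" using n by (simp add: field_simps)
    then have "exp (ln (real (a n))) < exp (r * real n)" by simp
    then show ?thesis using False by simp
  qed
  then show ?thesis by blast
qed

lemma gr_lower:
  assumes "ereal r < gr b"
  shows "frequently (\<lambda>n. real (b n) \<ge> exp (r * real n)) sequentially"
proof (rule ccontr)
  assume "\<not> ?thesis"
  then have ev: "eventually (\<lambda>n. real (b n) < exp (r * real n)) sequentially"
    by (simp add: not_frequently not_le)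
  have "eventually (\<lambda>n. (if b n = 0 then - \<infinity> else ereal (ln (real (b n)) / real n)) \<le> ereal r) sequentially"
  proof -
    have key: "(if b n = 0 then - \<infinity> else ereal (ln (real (b n)) / real n)) \<le> ereal r"
      if h: "real (b n) < exp (r * real n)" "n \<ge> 1" for n
    proof (cases "b n = 0")
      case False
      have "ln (real (b n)) < r * real n" using h(1) False
        by (metis exp_less_cancel_iff exp_ln of_nat_0_less_iff bot_nat_0.not_eq_extremum)
      then show ?thesis using h(2) False by (simp add: field_simps)
    qed simp
    show ?thesis
      by (rule eventually_mono[OF eventually_conj[OF ev eventually_ge_at_top[of "1::nat"]]])
         (use key in blast)
  qed
  then have "gr b \<le> ereal r" unfolding gr_def by (rule Limsup_bounded)
  then show False using assms by simp
qed




lemma div_lower: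
  fixes n k :: nat assumes "k > 0"
  shows "real n / real k - 1 \<le> real (n div k)"
proof -
  have "n < (n div k + 1) * k" using assms
    by (metis add.commute div_mult_mod_eq mod_less_divisor add_less_cancel_left distrib_right mult_1)
  then have "real n < (real (n div k) + 1) * real k" by (metis of_nat_1 of_nat_add of_nat_less_iff of_nat_mult)
  then show ?thesis using assms by (simp add: field_simps)
qed

lemma strict:
  fixes a b :: "nat \<Rightarrow> nat" and m C d :: nat
  assumes m: "m > 0" "m \<le> C" and ad: "\<forall>n. a n \<le> d ^ n" "d \<ge> 1"
    and fa: "\<forall>N. \<exists>n\<ge>N. a n > 0"
    and key: "\<And>g n. g \<ge> 1 \<Longrightarrow> b n * g ^ (n div (g * m))
         \<le> (\<Sum>l\<in>{n + (n div (g * m)) * m .. n + (n div (g * m)) * C}. a l)"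
  shows "gr b < gr a"
proof (rule ccontr)
  assume "\<not> gr b < gr a"
  then have ab: "gr a \<le> gr b" by simp
  have a0: "gr a \<ge> 0" using gr_ge0[OF fa] .
  have a1: "gr a \<le> ereal (ln (real d))" using gr_le[OF ad] .
  obtain lam where lam: "gr a = ereal lam" using a0 a1 by (cases "gr a") auto
  have lam0: "lam \<ge> 0" using a0 lam by simp
  define c0 where "c0 = (lam + 1) * real C + 2"
  define g :: nat where "g = nat \<lceil>exp c0\<rceil> + 1"
  have g1: "g \<ge> 1" unfolding g_def by simp
  have gexp: "real g \<ge> exp c0" unfolding g_def by linarith
  have lng: "ln (real g) \<ge> c0"
    using gexp by (metis exp_gt_zero ln_exp ln_le_cancel_iff order_less_le_trans)
  define k where "k = g * m"
  have kpos: "k > 0" unfolding k_def using g1 m(1) by simp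
  define eps where "eps = 1 / (2 * real k)"
  have eps0: "eps > 0" "eps \<le> 1" unfolding eps_def using kpos by (auto simp: field_simps)
  obtain N1 where N1: "\<forall>n\<ge>N1. real (a n) \<le> exp ((lam + eps) * real n)"
    using gr_upper[of a "lam + eps"] lam lam0 eps0 by auto
  have "ereal (lam - eps) < gr a" using lam eps0 by simp
  then have "ereal (lam - eps) < gr b" using ab by (rule order_less_le_trans)
  then have fr: "frequently (\<lambda>n. real (b n) \<ge> exp ((lam - eps) * real n)) sequentially"
    by (rule gr_lower)
  have ev: "eventually (\<lambda>n. n \<ge> N1 \<and> real n * real C + 1 < exp (real n / real k - 2)) sequentially"
    using eventually_conj[OF eventually_ge_at_top[of N1] exp_eventually[of "real k" "real C"]] kpos
    by simp
  obtain n where n: "real (b n) \<ge> exp ((lam - eps) * real n)" "n \<ge> N1"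
    "real n * real C + 1 < exp (real n / real k - 2)"
    using frequently_ex[OF frequently_eventually_frequently[OF fr ev]] by blast
  define Q where "Q = n div k"
  define I where "I = {n + Q * m .. n + Q * C}"
  have Qn: "Q \<le> n" unfolding Q_def by simp
  have Qlow: "real Q \<ge> real n / real k - 1" unfolding Q_def by (rule div_lower[OF kpos])
  have keyn: "b n * g ^ Q \<le> (\<Sum>l\<in>I. a l)" using key[OF g1, of n] unfolding Q_def I_def k_def .
  have le1: "real (a l) \<le> exp ((lam + eps) * real (n + Q * C))" if "l \<in> I" for l
  proof -
    have "l \<ge> N1" "l \<le> n + Q * C" using that n(2) unfolding I_def by auto
    then have "real (a l) \<le> exp ((lam + eps) * real l)" using N1 by simp
    also have "\<dots> \<le> exp ((lam + eps) * real (n + Q * C))"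
    proof -
      have "real l \<le> real (n + Q * C)" using \<open>l \<le> n + Q * C\<close> by (simp only: of_nat_le_iff)
      then have "(lam + eps) * real l \<le> (lam + eps) * real (n + Q * C)"
        using lam0 eps0 by (intro mult_left_mono) auto
      then show ?thesis by simp
    qed
    finally show ?thesis .
  qed
  have cardI: "real (card I) \<le> real n * real C + 1"
  proof -
    have "card I \<le> Q * C + 1" unfolding I_def by simp
    also have "\<dots> \<le> n * C + 1" using Qn by (simp add: mult_right_mono)
    finally show ?thesis by (metis of_nat_1 of_nat_add of_nat_le_iff of_nat_mult)
  qed
  have "exp ((lam - eps) * real n) * exp (real Q * c0) \<le> real (b n) * real g ^ Q"
  proof (rule mult_mono)
    show "exp (real Q * c0) \<le> real g ^ Q"
    proof -
      have "exp (real Q * c0) \<le> exp (real Q * ln (real g))" using lng by (simp add: mult_left_mono)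
      also have "\<dots> = real g ^ Q" using g1 by (simp add: exp_of_nat_mult)
      finally show ?thesis .
    qed
  qed (use n(1) in auto)
  also have "\<dots> \<le> real (\<Sum>l\<in>I. a l)" using keyn by (metis of_nat_le_iff of_nat_mult of_nat_power)
  also have "\<dots> = (\<Sum>l\<in>I. real (a l))" by simp
  also have "\<dots> \<le> real (card I) * exp ((lam + eps) * real (n + Q * C))"
    by (rule sum_bounded_above) (use le1 in auto)
  also have "\<dots> \<le> (real n * real C + 1) * exp ((lam + eps) * real (n + Q * C))"
    using cardI by (simp add: mult_right_mono)
  finally have big0: "exp ((lam - eps) * real n) * exp (real Q * c0)
     \<le> (real n * real C + 1) * exp ((lam + eps) * real (n + Q * C))" .
  define A where "A = (lam - eps) * real n + real Q * c0"
  define B where "B = (lam + eps) * real (n + Q * C)"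
  have "exp A \<le> (real n * real C + 1) * exp B" using big0 unfolding A_def B_def by (simp add: exp_add)
  then have "exp A / exp B \<le> real n * real C + 1" by (simp add: pos_divide_le_eq)
  then have big: "exp ((lam - eps) * real n + real Q * c0 - (lam + eps) * real (n + Q * C))
       \<le> real n * real C + 1" unfolding A_def B_def by (simp add: exp_diff)
  have "real n / real k - 2 \<le> (lam - eps) * real n + real Q * c0 - (lam + eps) * real (n + Q * C)"
  proof -
    have e2: "2 * eps * real n = real n / real k" unfolding eps_def using kpos by (simp add: field_simps)
    have "(lam - eps) * real n + real Q * c0 - (lam + eps) * real (n + Q * C)
        = - 2 * eps * real n + real Q * ((1 - eps) * real C + 2)"
      unfolding c0_def by (simp add: algebra_simps)
    also have "\<dots> \<ge> - 2 * eps * real n + 2 * real Q"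
    proof -
      have "0 \<le> real Q * ((1 - eps) * real C)" using eps0 by (intro mult_nonneg_nonneg) auto
      then show ?thesis by (simp add: algebra_simps)
    qed
    finally show ?thesis using e2 Qlow by linarith
  qed
  then have "exp (real n / real k - 2) \<le> real n * real C + 1" using big
    by (meson exp_le_cancel_iff order_trans)
  then show False using n(3) by simp
qed




lemma path_rep:
  assumes "path X E y c y" "y \<in> X"
  shows "path X E y (concat (replicate j c)) y"
  by (induction j) (auto intro: path.intros assms path_append)

theorem mainTheorem14:
  fixes X :: "'v set" and E :: "('v \<times> 'a \<times> 'v) set" and \<Sigma> :: "'a set"
  assumes "labelled_graph X E \<Sigma>"
    and "uniformly_connected X E"
    and "fully_deterministic X E \<Sigma>"
    and "x \<in> X" and "y \<in> X"
  shows "growth_sensitive (lang X E x y)"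
  unfolding growth_sensitive_def
proof (intro allI impI)
  fix F :: "'a list set"
  assume hF: "finite F \<and> F \<noteq> {} \<and> (\<forall>v\<in>F. \<exists>w\<in>lang X E x y. factor v w)"
  obtain v where vF: "v \<in> F" using hF by blast
  then obtain w0 where w0: "w0 \<in> lang X E x y" "factor v w0" using hF by blast
  have sub: "E \<subseteq> X \<times> \<Sigma> \<times> X" and finS: "finite \<Sigma>"
    using assms(1) unfolding labelled_graph_def by auto
  obtain K where rv: "\<forall>x a y. (x, a, y) \<in> E \<longrightarrow> (\<exists>w. path X E y w x \<and> length w \<le> K)"
    using assms(2) unfolding uniformly_connected_def by blast
  have w0S: "set w0 \<subseteq> \<Sigma>" using w0(1) path_props[OF _ sub] unfolding lang_def by blast
  have vne: "v \<noteq> []" using w0(2) unfolding factor_def by simp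
  have vS: "set v \<subseteq> \<Sigma>" using w0(2) w0S unfolding factor_def by auto
  interpret GG X E \<Sigma> K v
    using sub assms(3) rv vne vS by unfold_locales
  define L where "L = lang X E x y"
  have LS: "\<forall>w\<in>L. set w \<subseteq> \<Sigma>" unfolding L_def using lang_sub by blast
  have d1: "card \<Sigma> \<ge> 1" using vS vne finS
    by (metis One_nat_def Suc_leI card_gt_0_iff empty_iff list.set_sel(1) subset_iff)
  have fa: "\<forall>N. \<exists>n\<ge>N. nwords L n > 0"
  proof
    fix N
    define W where "W = w0 @ concat (replicate N (D y))"
    have p0: "path X E x w0 y" using w0(1) unfolding lang_def by simp
    have "path X E x W y" unfolding W_def
      using path_append[OF p0 path_rep[OF D_props(1)[OF assms(5)] assms(5)]] .
    then have WL: "W \<in> L" unfolding L_def lang_def by simp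
    have "length (concat (replicate N (D y))) = N * length (D y)"
      by (induction N) auto
    moreover have "length (D y) \<ge> 1" using D_props(2)[OF assms(5)] vne
      by (metis One_nat_def Suc_leI length_greater_0_conv order_trans)
    ultimately have "length W \<ge> N" unfolding W_def by (simp add: order_trans[OF _ le_add2])
    moreover have "nwords L (length W) > 0" unfolding nwords_def
      using WL finite_level[OF finS LS, of "length W"] by (auto simp: card_gt_0_iff)
    ultimately show "\<exists>n\<ge>N. nwords L n > 0" by blast
  qed
  have "gr (nwords (avoiding L F)) < gr (nwords L)"
  proof (rule strict[where m = "length v" and C = "length v + K * length v" and d = "card \<Sigma>"])
    show "0 < length v" using vne by simp
    show "length v \<le> length v + K * length v" by simp
    show "\<forall>n. nwords L n \<le> card \<Sigma> ^ n" using nwords_le[OF finS LS] by blast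
    show "1 \<le> card \<Sigma>" using d1 .
    show "\<forall>N. \<exists>n\<ge>N. 0 < nwords L n" using fa .
    fix g n :: nat
    show "nwords (avoiding L F) n * g ^ (n div (g * length v))
        \<le> (\<Sum>l\<in>{n + n div (g * length v) * length v..n + n div (g * length v) * (length v + K * length v)}.
             nwords L l)"
      using counting[OF finS vF assms(4), where g=g and n=n and y=y] unfolding L_def by simp
  qed
  then show "growth (avoiding (lang X E x y) F) < growth (lang X E x y)"
    unfolding L_def growth_gr .
qed


end
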